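(* Let $G_{\mathrm{AndII}}$ be the $q$-grammar with master variables $\{x,y\}$, rule $x_j\mapsto q^jx_jy_{j+1}$, $y_j\mapsto q^{j+1}x_{j+1}$ ($j\ge0$), and order AIO, and let $D$ be its $q$-derivative. Let $\phi$ be the evaluation $\phi(x_j)=x$, $\phi(y_j)=y$ for all $j$ (commuting indeterminates). Then for all $n\ge0$, \[ \phi\big(D^n(x_0)\big)=E^{II}_{n+1}(q;x,y),\qquad\text{where } E^{II}_m(q;x,y)=\sum_{T\in\mathcal{T}^{II}_m}x^{l(T)}y^{u(T)}q^{\operatorname{inv}(T)}. \]
   Context: $\mathbb{K}$ is a commutative ring with unity and characteristic zero, $q$ an indeterminate. For a set $S$ of master variables, $\mathbb{S}=\{s_i:s\in S,\ i\ge0\}$ is a set of non-commuting variables, $F(\mathbb{S})$ the free group on $\mathbb{S}$, $\mathbb{E}=\mathbb{K}[q][F(\mathbb{S})]$ its group algebra. A rule $R$ assigns to each $s_i$ an element of $\mathbb{E}$, extended by $R(s_i^{-1})=-s_i^{-1}R(s_i)s_{i+1}^{-1}$. The up-arrow $\uparrow$ is the linear map replacing each letter $s_i^{\pm1}$ by $s_{i+1}^{\pm1}$. AIO stably reorders the letters of a word according to the position of their underlying variable in $x_0,y_0,x_1,y_1,\dots$. The $q$-derivative of a $q$-grammar $(S,R,\rho)$ is the $\mathbb{K}[q]$-linear map with $D(w_1\cdots w_n)=\sum_{j=1}^n\rho\big(w_1\cdots w_{j-1}R(w_j)\uparrow(w_{j+1}\cdots w_n)\big)$, $D^0=\mathrm{id}$,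 $D^k=D\circ D^{k-1}$; an evaluation extends to a $\mathbb{K}[q]$-linear ring morphism. An increasing binary tree on $[m]$ is a rooted tree on $\{1,\dots,m\}$ with labels increasing along paths from the root, each vertex having at most one (distinguished) left child and at most one right child. $\mathcal{T}^{II}_m$ is the set of André II trees on $[m]$: increasing binary trees in which, for every vertex with at least one child, the minimum label of the left subtree is greater than the minimum label of the right subtree (minimum of the empty tree $=+\infty$). $l(T)$ is the number of leaves, $u(T)$ the number of vertices with exactly one child. An inversion of $T$ is a pair $(i,j)$ of vertices with $i>j$ such that either (1) $j$ belongs to the right subtree of some vertex $v$ on the path from the root to $i$ whose left child is on that path; or (2) $j$ is on the path from the root to $i$ and the left child of $j$ is on that path; $\operatorname{inv}(T)$ counts inversions. *)

theory Defs
  imports "HOL-Computational_Algebra.Polynomial" "HOL-Library.Extended_Nat"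
begin

datatype mvar = VX | VY

type_synonym letter = "mvar \<times> nat"
type_synonym word = "letter list"

(* elements of E = K[q][words]: finitely supported coefficient functions *)
type_synonym 'a elt = "word \<Rightarrow> 'a poly"

definition single_elt :: "word \<Rightarrow> 'a::zero poly \<Rightarrow> 'a elt" where
  "single_elt w c = (\<lambda>v. if v = w then c else 0)"

definition supp :: "'a::zero elt \<Rightarrow> word set" where
  "supp f = {w. f w \<noteq> 0}"

definition lin_ext :: "(word \<Rightarrow> 'a::comm_ring_1 elt) \<Rightarrow> 'a elt \<Rightarrow> 'a elt" where
  "lin_ext g f = (\<lambda>v. \<Sum>w\<in>supp f. f w * g w v)"

definition up :: "word \<Rightarrow> word" where
  "up w = map (\<lambda>(s, i). (s, Suc i)) w"

fun rule_AndII :: "letter \<Rightarrow> 'a::comm_ring_1 elt" where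
  "rule_AndII (VX, j) = single_elt [(VX, j), (VY, Suc j)] (monom 1 j)"
| "rule_AndII (VY, j) = single_elt [(VX, Suc j)] (monom 1 (Suc j))"

fun aio_key :: "letter \<Rightarrow> nat" where
  "aio_key (VX, j) = 2 * j"
| "aio_key (VY, j) = 2 * j + 1"

(* AIO: stable reordering of letters (sort_key is a stable insertion sort) *)
definition AIO :: "word \<Rightarrow> word" where
  "AIO w = sort_key aio_key w"

definition D_word :: "word \<Rightarrow> 'a::comm_ring_1 elt" where
  "D_word w = (\<lambda>v. \<Sum>j<length w. \<Sum>u\<in>supp (rule_AndII (w ! j) :: 'a elt).
      if AIO (take j w @ u @ up (drop (Suc j) w)) = v then rule_AndII (w ! j) u else 0)"

definition D_AndII :: "'a::comm_ring_1 elt \<Rightarrow> 'a elt" where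
  "D_AndII = lin_ext D_word"

(* coefficient of x^a y^b q^c in phi(f), where phi(x_j) = x, phi(y_j) = y *)
definition phi_coeff :: "'a::comm_ring_1 elt \<Rightarrow> nat \<Rightarrow> nat \<Rightarrow> nat \<Rightarrow> 'a" where
  "phi_coeff f a b c =
     (\<Sum>w\<in>{w\<in>supp f. length (filter (\<lambda>l. fst l = VX) w) = a
                    \<and> length (filter (\<lambda>l. fst l = VY) w) = b}. coeff (f w) c)"

(* Node l v r : vertex v with left subtree l and right subtree r; Leaf = empty tree *)
datatype btree = Leaf | Node btree nat btree

fun labels :: "btree \<Rightarrow> nat set" where
  "labels Leaf = {}"
| "labels (Node l v r) = insert v (labels l \<union> labels r)"

fun label_list :: "btree \<Rightarrow> nat list" where
  "label_list Leaf = []"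
| "label_list (Node l v r) = v # label_list l @ label_list r"

fun subtrees :: "btree \<Rightarrow> btree set" where
  "subtrees Leaf = {}"
| "subtrees (Node l v r) = insert (Node l v r) (subtrees l \<union> subtrees r)"

fun increasing :: "btree \<Rightarrow> bool" where
  "increasing Leaf = True"
| "increasing (Node l v r) =
     (increasing l \<and> increasing r \<and> (\<forall>x\<in>labels l \<union> labels r. v < x))"

definition incr_tree_on :: "nat \<Rightarrow> btree \<Rightarrow> bool" where
  "incr_tree_on m T \<longleftrightarrow> distinct (label_list T) \<and> labels T = {1..m} \<and> increasing T"

definition min_label :: "btree \<Rightarrow> enat" where
  "min_label T = (if T = Leaf then \<infinity> else enat (Min (labels T)))"

fun andre2 :: "btree \<Rightarrow> bool" where
  "andre2 Leaf = True"
| "andre2 (Node l v r) = (andre2 l \<and> andre2 r \<and>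
     ((l \<noteq> Leaf \<or> r \<noteq> Leaf) \<longrightarrow> min_label l > min_label r))"

definition andreII_trees :: "nat \<Rightarrow> btree set" where
  "andreII_trees m = {T. incr_tree_on m T \<and> andre2 T}"

fun n_leaves :: "btree \<Rightarrow> nat" where
  "n_leaves Leaf = 0"
| "n_leaves (Node l v r) =
     (if l = Leaf \<and> r = Leaf then 1 else 0) + n_leaves l + n_leaves r"

fun n_unary :: "btree \<Rightarrow> nat" where
  "n_unary Leaf = 0"
| "n_unary (Node l v r) =
     (if (l = Leaf) \<noteq> (r = Leaf) then 1 else 0) + n_unary l + n_unary r"

(* v is on the path from the root to i and the left child of v is on that path,
   i.e. i lies in the left subtree of v *)
definition goes_left :: "btree \<Rightarrow> nat \<Rightarrow> nat \<Rightarrow> bool" where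
  "goes_left T v i \<longleftrightarrow> (\<exists>l r. Node l v r \<in> subtrees T \<and> i \<in> labels l)"

definition in_right_sub :: "btree \<Rightarrow> nat \<Rightarrow> nat \<Rightarrow> bool" where
  "in_right_sub T v j \<longleftrightarrow> (\<exists>l r. Node l v r \<in> subtrees T \<and> j \<in> labels r)"

definition inversions :: "btree \<Rightarrow> (nat \<times> nat) set" where
  "inversions T = {(i, j). i \<in> labels T \<and> j \<in> labels T \<and> i > j \<and>
      ((\<exists>v. goes_left T v i \<and> in_right_sub T v j) \<or> goes_left T j i)}"

definition inv_count :: "btree \<Rightarrow> nat" where
  "inv_count T = card (inversions T)"

end

theory Submission
  imports Defs
begin


fun sz :: "btree \<Rightarrow> nat" where
  "sz Leaf = 0"
| "sz (Node l v r) = Suc (sz l + sz r)"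

fun wl :: "btree \<Rightarrow> nat \<Rightarrow> word" where
  "wl Leaf c = []"
| "wl (Node l v r) c = wl r c @
     (if l = Leaf then (if r = Leaf then [(VX, c)] else [(VY, c + sz r)]) else []) @
     wl l (c + 1 + sz r)"

definition nsp :: "btree \<Rightarrow> nat" where "nsp T = length (wl T 0)"

lemma nsp_Leaf[simp]: "nsp Leaf = 0" by (simp add: nsp_def)

fun ins :: "btree \<Rightarrow> nat \<Rightarrow> nat \<Rightarrow> btree" where
  "ins Leaf k M = Leaf"
| "ins (Node l v r) k M =
    (if k < nsp r then Node l v (ins r k M)
     else if k = nsp r \<and> l = Leaf then
       (if r = Leaf then Node Leaf v (Node Leaf M Leaf) else Node (Node Leaf M Leaf) v r)
     else Node (ins l (k - nsp r - (if l = Leaf then 1 else 0)) M) v r)"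

definition shw :: "nat \<Rightarrow> word \<Rightarrow> word" where
  "shw d w = map (\<lambda>(s, i). (s, i + d)) w"

lemma wl_shift: "wl T (c + d) = shw d (wl T c)"
proof (induction T arbitrary: c)
  case Leaf thus ?case by (simp add: shw_def)
next
  case (Node l v r)
  have "wl l (c + d + 1 + sz r) = shw d (wl l (c + 1 + sz r))"
    using Node.IH(1)[of "c + 1 + sz r"] by (simp add: algebra_simps)
  thus ?case using Node.IH(2)[of c] by (auto simp: shw_def algebra_simps)
qed

lemma up_shw: "up w = shw 1 w"
  by (simp add: up_def shw_def)

lemma wl_Suc: "wl T (Suc c) = up (wl T c)"
  using wl_shift[of T c 1] by (simp add: up_shw)

lemma length_wl: "length (wl T c) = length (wl T 0)"
  using wl_shift[of T 0 c] by (simp add: shw_def)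

lemma length_wl_nsp[simp]: "length (wl T c) = nsp T"
  using length_wl nsp_def by simp

lemma nsp_Node: "nsp (Node l v r) = nsp r + (if l = Leaf then 1 else 0) + nsp l"
  unfolding nsp_def[of "Node l v r"] by simp

lemma wl_c: "wl T c = shw c (wl T 0)"
  using wl_shift[of T 0 c] by simp

lemma length_up[simp]: "length (up w) = length w"
  by (simp add: up_def)

lemma up_append[simp]: "up (a @ b) = up a @ up b" by (simp add: up_def)
lemma up_take: "up (take k w) = take k (up w)" by (simp add: up_def take_map)
lemma up_drop: "up (drop k w) = drop k (up w)" by (simp add: up_def drop_map)

fun rw :: "letter \<Rightarrow> word" where
  "rw (VX, j) = [(VX, j), (VY, Suc j)]"
| "rw (VY, j) = [(VX, Suc j)]"

fun ex :: "letter \<Rightarrow> nat" where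
  "ex (VX, j) = j"
| "ex (VY, j) = Suc j"

lemma wl_Leaf_iff: "wl T c = [] \<longleftrightarrow> T = Leaf"
  by (induction T arbitrary: c) auto

lemma sz_ins: "k < nsp T \<Longrightarrow> sz (ins T k M) = Suc (sz T)"
  by (induction T arbitrary: k) (auto simp: nsp_Node)

lemma ins_nonLeaf: "k < nsp T \<Longrightarrow> ins T k M \<noteq> Leaf"
  by (induction T arbitrary: k) (auto simp: nsp_Node)

lemma up_Nil[simp]: "up [] = []" by (simp add: up_def)
lemma up_Cons[simp]: "up (x # xs) = (fst x, Suc (snd x)) # up xs" by (simp add: up_def split: prod.splits)

lemma wl_ins:
  "k < nsp T \<Longrightarrow> wl (ins T k M) c =
     take k (wl T c) @ rw (wl T c ! k) @ up (drop (Suc k) (wl T c))"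
proof (induction T arbitrary: k c)
  case Leaf thus ?case by simp
next
  case (Node l v r)
  show ?case
  proof (cases "k < nsp r")
    case True
    have rne: "r \<noteq> Leaf" using True by auto
    have ine: "ins r k M \<noteq> Leaf" using ins_nonLeaf True by blast
    have e1: "wl l (c + 1 + sz (ins r k M)) = up (wl l (c + 1 + sz r))"
      using sz_ins[OF True] wl_Suc by simp
    show ?thesis using True Node.IH(2)[OF True, of c] rne ine e1 sz_ins[OF True]
      by (auto simp: nth_append)
  next
    case False
    show ?thesis
    proof (cases "k = nsp r \<and> l = Leaf")
      case True
      thus ?thesis
      proof (cases "r = Leaf")
        case True
        thus ?thesis using \<open>k = nsp r \<and> l = Leaf\<close> by simp
      next
        case False
        thus ?thesis using \<open>k = nsp r \<and> l = Leaf\<close> by (simp add: nth_append)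
      qed
    next
      case False2: False
      have lne: "l \<noteq> Leaf" using False False2 Node.prems by (auto simp: nsp_Node)
      define k' where "k' = k - nsp r"
      have kk: "k = nsp r + k'" using False k'_def by simp
      have k'l: "k' < nsp l" using Node.prems kk lne by (simp add: nsp_Node)
      have "ins (Node l v r) k M = Node (ins l k' M) v r" using False False2 lne k'_def by simp
      moreover have "ins l k' M \<noteq> Leaf" using ins_nonLeaf k'l by blast
      ultimately show ?thesis using Node.IH(1)[OF k'l, of "c + 1 + sz r"] lne kk
        by (simp add: nth_append)
    qed
  qed
qed

lemma wl_bounds: "x \<in> set (wl T c) \<Longrightarrow> c \<le> snd x \<and> snd x < c + sz T"
proof (induction T arbitrary: c)
  case Leaf thus ?case by simp
next
  case (Node l v r)
  from Node.prems consider "x \<in> set (wl r c)" | "x \<in> set (wl l (c + 1 + sz r))"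
     | "l = Leaf" "r = Leaf" "x = (VX, c)" | "l = Leaf" "x = (VY, c + sz r)"
    by (auto split: if_splits)
  thus ?case
  proof cases
    case 1 thus ?thesis using Node.IH(2)[of c] by fastforce
  next
    case 2 thus ?thesis using Node.IH(1)[of "c + 1 + sz r"] by fastforce
  qed auto
qed

lemma aio_key_bounds: "2 * snd x \<le> aio_key x \<and> aio_key x \<le> 2 * snd x + 1"
  by (cases x, cases "fst x") auto

lemma wl_sorted: "sorted (map aio_key (wl T c))"
proof (induction T arbitrary: c)
  case Leaf thus ?case by simp
next
  case (Node l v r)
  have A: "\<forall>x\<in>set (wl r c). aio_key x < 2 * (c + sz r)"
  proof
    fix x assume x: "x \<in> set (wl r c)"
    thus "aio_key x < 2 * (c + sz r)" using wl_bounds[OF x] aio_key_bounds[of x] by (elim conjE) presburger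
  qed
  have B: "\<forall>x\<in>set (wl l (c + 1 + sz r)). 2 * (c + sz r) + 2 \<le> aio_key x"
  proof
    fix x assume x: "x \<in> set (wl l (c + 1 + sz r))"
    thus "2 * (c + sz r) + 2 \<le> aio_key x" using wl_bounds[OF x] aio_key_bounds[of x] by (elim conjE) presburger
  qed
  have C: "\<forall>x\<in>set (wl r c). \<forall>y\<in>set (wl l (c + 1 + sz r)). aio_key x \<le> aio_key y"
    using A B by (meson less_imp_le_nat order.strict_trans2 le_trans add_leD1 less_le_trans)
  show ?case using Node.IH[of "c + 1 + sz r"] Node.IH(2)[of c] A B C
    by (auto simp: sorted_append intro: less_imp_le order.trans)
qed

lemma AIO_wl: "AIO (wl T c) = wl T c"
  unfolding AIO_def by (rule sort_key_id_if_sorted[OF wl_sorted])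



lemma set_label_list[simp]: "set (label_list T) = labels T"
  by (induction T) auto

lemma finite_labels[simp]: "finite (labels T)"
  by (induction T) auto

lemma labels_Leaf_iff: "labels T = {} \<longleftrightarrow> T = Leaf"
  by (induction T) auto

lemma length_label_list: "length (label_list T) = sz T"
  by (induction T) auto

lemma card_labels: "distinct (label_list T) \<Longrightarrow> card (labels T) = sz T"
  using distinct_card[of "label_list T"] length_label_list[of T] by simp

lemma ins_cases[consumes 1, case_names R X Y L]:
  assumes "k < nsp (Node l v r)"
  obtains "k < nsp r" "ins (Node l v r) k M = Node l v (ins r k M)"
  | "k = nsp r" "l = Leaf" "r = Leaf" "ins (Node l v r) k M = Node Leaf v (Node Leaf M Leaf)"
  | "k = nsp r" "l = Leaf" "r \<noteq> Leaf" "ins (Node l v r) k M = Node (Node Leaf M Leaf) v r"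
  | k' where "k = nsp r + k'" "k' < nsp l" "l \<noteq> Leaf" "ins (Node l v r) k M = Node (ins l k' M) v r"
proof -
  consider (a) "k < nsp r" | (b) "k = nsp r \<and> l = Leaf" | (c) "\<not> k < nsp r" "\<not> (k = nsp r \<and> l = Leaf)"
    by blast
  thus thesis
  proof cases
    case a thus thesis using that(1) by simp
  next
    case b thus thesis using that(2,3) by (cases "r = Leaf") auto
  next
    case c
    have lne: "l \<noteq> Leaf" using c assms by (auto simp: nsp_Node)
    show thesis using that(4)[of "k - nsp r"] c lne assms by (auto simp: nsp_Node)
  qed
qed

lemma labels_ins: "k < nsp T \<Longrightarrow> labels (ins T k M) = insert M (labels T)"
proof (induction T arbitrary: k)
  case Leaf thus ?case by simp
next
  case (Node l v r)
  from Node.prems show ?case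
  proof (cases rule: ins_cases[where M=M])
    case R thus ?thesis using Node.IH(2) by auto
  next
    case (L k') thus ?thesis using Node.IH(1) by auto
  qed auto
qed

lemma distinct_ins: "k < nsp T \<Longrightarrow> distinct (label_list T) \<Longrightarrow> M \<notin> labels T \<Longrightarrow>
   distinct (label_list (ins T k M))"
proof (induction T arbitrary: k)
  case Leaf thus ?case by simp
next
  case (Node l v r)
  from Node.prems(1) show ?case
  proof (cases rule: ins_cases[where M=M])
    case R thus ?thesis using Node.IH(2)[of k] Node.prems labels_ins[of k r M] by auto
  next
    case (L k') thus ?thesis using Node.IH(1)[of k'] Node.prems labels_ins[of k' l M] by auto
  qed (use Node.prems in auto)
qed

lemma incr_ins: "k < nsp T \<Longrightarrow> increasing T \<Longrightarrow> \<forall>x\<in>labels T. x < M \<Longrightarrow> increasing (ins T k M)"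
proof (induction T arbitrary: k)
  case Leaf thus ?case by simp
next
  case (Node l v r)
  from Node.prems(1) show ?case
  proof (cases rule: ins_cases[where M=M])
    case R thus ?thesis using Node.IH(2)[of k] Node.prems labels_ins[of k r M] by auto
  next
    case (L k') thus ?thesis using Node.IH(1)[of k'] Node.prems labels_ins[of k' l M] by auto
  qed (use Node.prems in auto)
qed

lemma min_label_ins: "k < nsp T \<Longrightarrow> \<forall>x\<in>labels T. x < M \<Longrightarrow> min_label (ins T k M) = min_label T"
proof -
  assume k: "k < nsp T" and M: "\<forall>x\<in>labels T. x < M"
  have ne: "T \<noteq> Leaf" using k by (cases T) auto
  hence ne': "labels T \<noteq> {}" using labels_Leaf_iff by blast
  have "Min (insert M (labels T)) = Min (labels T)"
  proof -
    have "Min (labels T) < M" using M Min_in[OF finite_labels ne'] by blast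
    thus ?thesis using Min_insert[OF finite_labels ne', of M] by (simp add: min_def)
  qed
  thus ?thesis using ins_nonLeaf[OF k] ne labels_ins[OF k] by (simp add: min_label_def)
qed

lemma andre_ins: "k < nsp T \<Longrightarrow> andre2 T \<Longrightarrow> \<forall>x\<in>labels T. x < M \<Longrightarrow> andre2 (ins T k M)"
proof (induction T arbitrary: k)
  case Leaf thus ?case by simp
next
  case (Node l v r)
  from Node.prems(1) show ?case
  proof (cases rule: ins_cases[where M=M])
    case R
    have "r \<noteq> Leaf" using R by auto
    moreover have "ins r k M \<noteq> Leaf" using ins_nonLeaf R by blast
    ultimately show ?thesis using R Node.IH(2)[of k] Node.prems min_label_ins[of k r M] by auto
  next
    case (L k') thus ?thesis using Node.IH(1)[of k'] Node.prems min_label_ins[of k' l M] by auto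
  next
    case X thus ?thesis by (simp add: min_label_def)
  next
    case Y
    have "Min (labels r) < M" using Y Node.prems labels_Leaf_iff[of r] Min_in[of "labels r"] by auto
    thus ?thesis using Y Node.prems by (auto simp: min_label_def)
  qed
qed

lemma andre_ins_back: "k < nsp T \<Longrightarrow> andre2 (ins T k M) \<Longrightarrow> \<forall>x\<in>labels T. x < M \<Longrightarrow> andre2 T"
proof (induction T arbitrary: k)
  case Leaf thus ?case by simp
next
  case (Node l v r)
  from Node.prems(1) show ?case
  proof (cases rule: ins_cases[where M=M])
    case R
    have "r \<noteq> Leaf" using R by auto
    moreover have "ins r k M \<noteq> Leaf" using ins_nonLeaf R by blast
    ultimately show ?thesis using R Node.IH(2)[of k] Node.prems min_label_ins[of k r M] by auto
  next
    case (L k')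
    moreover have "ins l k' M \<noteq> Leaf" using ins_nonLeaf L by blast
    ultimately show ?thesis using Node.IH(1)[of k'] Node.prems min_label_ins[of k' l M] by auto
  next
    case X thus ?thesis by (simp add: min_label_def)
  next
    case Y
    thus ?thesis using Y Node.prems by (auto simp: min_label_def)
  qed
qed



fun del :: "nat \<Rightarrow> btree \<Rightarrow> btree" where
  "del M Leaf = Leaf"
| "del M (Node l v r) = (if v = M then Leaf else Node (del M l) v (del M r))"

fun pos :: "nat \<Rightarrow> btree \<Rightarrow> nat" where
  "pos M Leaf = 0"
| "pos M (Node l v r) =
    (if M \<in> labels r then (if r = Node Leaf M Leaf then 0 else pos M r)
     else if l = Node Leaf M Leaf then nsp r else nsp r + pos M l)"

lemma del_notin: "M \<notin> labels T \<Longrightarrow> del M T = T"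
  by (induction T) auto

lemma ins_ne_single: "k < nsp T \<Longrightarrow> M \<notin> labels T \<Longrightarrow> ins T k M \<noteq> Node Leaf M Leaf"
proof
  assume k: "k < nsp T" and M: "M \<notin> labels T" and e: "ins T k M = Node Leaf M Leaf"
  have "labels (ins T k M) = insert M (labels T)" by (rule labels_ins[OF k])
  hence "labels T \<subseteq> {M}" using e by auto
  hence "labels T = {}" using M by auto
  hence "T = Leaf" using labels_Leaf_iff by blast
  thus False using k by simp
qed

lemma del_ins: "k < nsp T \<Longrightarrow> M \<notin> labels T \<Longrightarrow> del M (ins T k M) = T"
proof (induction T arbitrary: k)
  case Leaf thus ?case by simp
next
  case (Node l v r)
  from Node.prems(1) show ?case
  proof (cases rule: ins_cases[where M=M])
    case R thus ?thesis using Node.IH(2)[of k] Node.prems del_notin[of M l] by auto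
  next
    case (L k') thus ?thesis using Node.IH(1)[of k'] Node.prems del_notin[of M r] by auto
  qed (use Node.prems del_notin[of M r] in auto)
qed

lemma pos_ins: "k < nsp T \<Longrightarrow> M \<notin> labels T \<Longrightarrow> pos M (ins T k M) = k"
proof (induction T arbitrary: k)
  case Leaf thus ?case by simp
next
  case (Node l v r)
  from Node.prems(1) show ?case
  proof (cases rule: ins_cases[where M=M])
    case R thus ?thesis using Node.IH(2)[of k] Node.prems labels_ins[of k r M] ins_ne_single[of k r M] by auto
  next
    case (L k') thus ?thesis using Node.IH(1)[of k'] Node.prems ins_ne_single[of k' l M] by auto
  qed (use Node.prems in auto)
qed

lemma incr_top: "increasing (Node l v r) \<Longrightarrow> \<forall>x\<in>labels (Node l v r). x \<le> v \<Longrightarrow> l = Leaf \<and> r = Leaf"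
proof -
  assume a: "increasing (Node l v r)" "\<forall>x\<in>labels (Node l v r). x \<le> v"
  have "labels l = {}" "labels r = {}" using a by (auto simp: not_less[symmetric])
  thus ?thesis using labels_Leaf_iff by blast
qed

lemma ins_del_pos:
  "distinct (label_list T) \<Longrightarrow> increasing T \<Longrightarrow> andre2 T \<Longrightarrow> M \<in> labels T \<Longrightarrow>
   \<forall>x\<in>labels T. x \<le> M \<Longrightarrow> T \<noteq> Node Leaf M Leaf \<Longrightarrow>
   pos M T < nsp (del M T) \<and> ins (del M T) (pos M T) M = T"
proof (induction T)
  case Leaf thus ?case by simp
next
  case (Node l v r)
  have vM: "v \<noteq> M"
  proof
    assume "v = M"
    hence "l = Leaf \<and> r = Leaf" using incr_top[of l v r] Node.prems by auto
    thus False using Node.prems \<open>v = M\<close> by simp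
  qed
  show ?case
  proof (cases "M \<in> labels r")
    case True
    have Ml: "M \<notin> labels l" using True Node.prems(1) by auto
    have lM: "\<forall>x\<in>labels l. x < M"
    proof
      fix x assume "x \<in> labels l"
      thus "x < M" using Ml Node.prems(5) by (metis UnI1 insert_iff labels.simps(2) le_neq_implies_less)
    qed
    show ?thesis
    proof (cases "r = Node Leaf M Leaf")
      case True
      have "l = Leaf"
      proof (rule ccontr)
        assume "l \<noteq> Leaf"
        hence ne: "labels l \<noteq> {}" using labels_Leaf_iff by blast
        have "Min (labels l) < M" using lM Min_in[OF finite_labels ne] by blast
        moreover have "min_label l > min_label r" using Node.prems(3) \<open>l \<noteq> Leaf\<close> by simp
        ultimately show False using True \<open>l \<noteq> Leaf\<close> by (simp add: min_label_def)
      qed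
      thus ?thesis using True vM by (simp add: nsp_Node)
    next
      case False
      have IH: "pos M r < nsp (del M r) \<and> ins (del M r) (pos M r) M = r"
        using Node.IH(2) Node.prems True False by auto
      have dT: "del M (Node l v r) = Node l v (del M r)" using vM del_notin[OF Ml] by simp
      show ?thesis using IH dT True False by (simp add: nsp_Node)
    qed
  next
    case False
    have Ml: "M \<in> labels l" using False Node.prems vM by auto
    show ?thesis
    proof (cases "l = Node Leaf M Leaf")
      case True
      have "r \<noteq> Leaf"
      proof
        assume "r = Leaf"
        thus False using Node.prems(3) True by (simp add: min_label_def)
      qed
      thus ?thesis using True vM False del_notin[OF False] by (simp add: nsp_Node)
    next
      case lne: False
      have IH: "pos M l < nsp (del M l) \<and> ins (del M l) (pos M l) M = l"
        using Node.IH(1) Node.prems Ml lne by auto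
      have d0: "del M l \<noteq> Leaf" using IH by auto
      have dT: "del M (Node l v r) = Node (del M l) v r" using vM del_notin[OF False] by simp
      show ?thesis using IH dT False lne d0 by (simp add: nsp_Node)
    qed
  qed
qed

lemma labels_del_sub: "labels (del M T) \<subseteq> labels T"
  by (induction T) auto

lemma labels_del: "increasing T \<Longrightarrow> \<forall>x\<in>labels T. x \<le> M \<Longrightarrow> labels (del M T) = labels T - {M}"
proof (induction T)
  case Leaf thus ?case by simp
next
  case (Node l v r)
  show ?case
  proof (cases "v = M")
    case True
    thus ?thesis using incr_top[of l v r] Node.prems by auto
  next
    case False
    thus ?thesis using Node by auto
  qed
qed

lemma distinct_del: "distinct (label_list T) \<Longrightarrow> distinct (label_list (del M T))"
proof (induction T)
  case (Node l v r)
  have "labels (del M l) \<subseteq> labels l" "labels (del M r) \<subseteq> labels r" by (rule labels_del_sub)+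
  thus ?case using Node by auto
qed simp

lemma incr_del: "increasing T \<Longrightarrow> increasing (del M T)"
proof (induction T)
  case (Node l v r)
  have "labels (del M l) \<subseteq> labels l" "labels (del M r) \<subseteq> labels r" by (rule labels_del_sub)+
  thus ?case using Node by auto
qed simp



lemma subtrees_labels: "Node l' w r' \<in> subtrees T \<Longrightarrow> insert w (labels l' \<union> labels r') \<subseteq> labels T"
  by (induction T) auto

lemma goes_left_Node:
  assumes "distinct (label_list (Node l v r))"
  shows "goes_left (Node l v r) w i \<longleftrightarrow> (w = v \<and> i \<in> labels l) \<or> goes_left l w i \<or> goes_left r w i"
proof
  assume "goes_left (Node l v r) w i"
  then obtain l' r' where a: "Node l' w r' \<in> subtrees (Node l v r)" "i \<in> labels l'"
    unfolding goes_left_def by blast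
  show "(w = v \<and> i \<in> labels l) \<or> goes_left l w i \<or> goes_left r w i"
  proof (cases "Node l' w r' = Node l v r")
    case True thus ?thesis using a by simp
  next
    case False
    hence "Node l' w r' \<in> subtrees l \<or> Node l' w r' \<in> subtrees r" using a(1)
      by (metis Un_iff insert_iff subtrees.simps(2))
    thus ?thesis using a unfolding goes_left_def by blast
  qed
next
  assume "(w = v \<and> i \<in> labels l) \<or> goes_left l w i \<or> goes_left r w i"
  thus "goes_left (Node l v r) w i" unfolding goes_left_def by auto
qed

lemma in_right_sub_Node:
  shows "in_right_sub (Node l v r) w i \<longleftrightarrow> (w = v \<and> i \<in> labels r) \<or> in_right_sub l w i \<or> in_right_sub r w i"
proof
  assume "in_right_sub (Node l v r) w i"
  then obtain l' r' where a: "Node l' w r' \<in> subtrees (Node l v r)" "i \<in> labels r'"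
    unfolding in_right_sub_def by blast
  show "(w = v \<and> i \<in> labels r) \<or> in_right_sub l w i \<or> in_right_sub r w i"
  proof (cases "Node l' w r' = Node l v r")
    case True thus ?thesis using a by simp
  next
    case False
    hence "Node l' w r' \<in> subtrees l \<or> Node l' w r' \<in> subtrees r" using a(1)
      by (metis Un_iff insert_iff subtrees.simps(2))
    thus ?thesis using a unfolding in_right_sub_def by blast
  qed
next
  assume "(w = v \<and> i \<in> labels r) \<or> in_right_sub l w i \<or> in_right_sub r w i"
  thus "in_right_sub (Node l v r) w i" unfolding in_right_sub_def by auto
qed

lemma goes_left_labels: "goes_left T w i \<Longrightarrow> w \<in> labels T \<and> i \<in> labels T"
proof -
  assume "goes_left T w i"
  then obtain l' r' where a: "Node l' w r' \<in> subtrees T" "i \<in> labels l'"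
    unfolding goes_left_def by blast
  from subtrees_labels[OF a(1)] a(2) show ?thesis by (simp add: subset_iff)
qed

lemma in_right_sub_labels: "in_right_sub T w i \<Longrightarrow> w \<in> labels T \<and> i \<in> labels T"
proof -
  assume "in_right_sub T w i"
  then obtain l' r' where a: "Node l' w r' \<in> subtrees T" "i \<in> labels r'"
    unfolding in_right_sub_def by blast
  from subtrees_labels[OF a(1)] a(2) show ?thesis by (simp add: subset_iff)
qed

lemma inversions_Leaf[simp]: "inversions Leaf = {}"
  by (simp add: inversions_def)

lemma inversions_Node:
  assumes d: "distinct (label_list (Node l v r))"
  shows "inversions (Node l v r) = inversions l \<union> inversions r \<union>
           {(i, j). i \<in> labels l \<and> j \<in> insert v (labels r) \<and> j < i}"
proof -
  have dj: "labels l \<inter> labels r = {}" "v \<notin> labels l" "v \<notin> labels r" using d by auto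
  have GL: "\<And>w i. goes_left (Node l v r) w i \<longleftrightarrow> (w = v \<and> i \<in> labels l) \<or> goes_left l w i \<or> goes_left r w i"
    using goes_left_Node[OF d] by blast
  have IR: "\<And>w i. in_right_sub (Node l v r) w i \<longleftrightarrow> (w = v \<and> i \<in> labels r) \<or> in_right_sub l w i \<or> in_right_sub r w i"
    using in_right_sub_Node by blast
  note Ll = goes_left_labels[of l] in_right_sub_labels[of l]
  note Lr = goes_left_labels[of r] in_right_sub_labels[of r]
  show ?thesis
  proof (intro set_eqI iffI)
    fix p assume p: "p \<in> inversions (Node l v r)"
    obtain i j where pij: "p = (i, j)" by (cases p)
    have A: "i \<in> labels (Node l v r)" "j \<in> labels (Node l v r)" "j < i"
      and B: "(\<exists>w. goes_left (Node l v r) w i \<and> in_right_sub (Node l v r) w j) \<or> goes_left (Node l v r) j i"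
      using p pij by (auto simp: inversions_def)
    from B consider (a) w where "goes_left (Node l v r) w i" "in_right_sub (Node l v r) w j"
      | (b) "goes_left (Node l v r) j i" by blast
    thus "p \<in> inversions l \<union> inversions r \<union> {(i, j). i \<in> labels l \<and> j \<in> insert v (labels r) \<and> j < i}"
    proof cases
      case a
      hence g: "w = v \<and> i \<in> labels l \<or> goes_left l w i \<or> goes_left r w i"
        and h: "w = v \<and> j \<in> labels r \<or> in_right_sub l w j \<or> in_right_sub r w j"
        using a GL[of w i] IR[of w j] by simp_all
      show ?thesis using g h A dj goes_left_labels[of l w i] goes_left_labels[of r w i]
        in_right_sub_labels[of l w j] in_right_sub_labels[of r w j] unfolding pij inversions_def
        by auto
    next
      case b
      hence g: "j = v \<and> i \<in> labels l \<or> goes_left l j i \<or> goes_left r j i"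
        using GL[of j i] by simp
      show ?thesis using g A dj goes_left_labels[of l j i] goes_left_labels[of r j i]
        unfolding pij inversions_def by auto
    qed
  next
    fix p assume p: "p \<in> inversions l \<union> inversions r \<union> {(i, j). i \<in> labels l \<and> j \<in> insert v (labels r) \<and> j < i}"
    obtain i j where pij: "p = (i, j)" by (cases p)
    from p consider (a) "(i, j) \<in> inversions l" | (b) "(i, j) \<in> inversions r"
      | (c) "i \<in> labels l" "j \<in> insert v (labels r)" "j < i" unfolding pij by blast
    thus "p \<in> inversions (Node l v r)"
    proof cases
      case a
      hence "i \<in> labels l" "j \<in> labels l" "j < i"
        "(\<exists>w. goes_left l w i \<and> in_right_sub l w j) \<or> goes_left l j i"
        by (auto simp: inversions_def)
      thus ?thesis unfolding pij inversions_def using GL IR by auto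
    next
      case b
      hence "i \<in> labels r" "j \<in> labels r" "j < i"
        "(\<exists>w. goes_left r w i \<and> in_right_sub r w j) \<or> goes_left r j i"
        by (auto simp: inversions_def)
      thus ?thesis unfolding pij inversions_def using GL IR by auto
    next
      case c
      show ?thesis
      proof (cases "j = v")
        case True
        thus ?thesis using c GL unfolding pij inversions_def by auto
      next
        case False
        hence "goes_left (Node l v r) v i" "in_right_sub (Node l v r) v j" using c GL IR by auto
        thus ?thesis using c unfolding pij inversions_def by auto
      qed
    qed
  qed
qed

lemma finite_inversions: "finite (inversions T)"
proof -
  have "inversions T \<subseteq> labels T \<times> labels T" by (auto simp: inversions_def)
  thus ?thesis by (rule finite_subset) simp
qed

lemma inversions_sub: "inversions T \<subseteq> labels T \<times> labels T"
  by (auto simp: inversions_def)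

lemma ex_shift: "k < nsp T \<Longrightarrow> ex (wl T c ! k) = ex (wl T 0 ! k) + c"
proof -
  assume k: "k < nsp T"
  have "wl T c ! k = (case wl T 0 ! k of (s, i) \<Rightarrow> (s, i + c))"
    using k by (simp add: wl_c[of T c] shw_def)
  thus ?thesis by (cases "wl T 0 ! k", cases "fst (wl T 0 ! k)") auto
qed

lemma inv_ins:
  "k < nsp T \<Longrightarrow> distinct (label_list T) \<Longrightarrow> \<forall>x\<in>labels T. x < M \<Longrightarrow>
   \<exists>N. inversions (ins T k M) = inversions T \<union> ({M} \<times> N) \<and> N \<subseteq> labels T \<and>
       card N = ex (wl T 0 ! k)"
proof (induction T arbitrary: k)
  case Leaf thus ?case by simp
next
  case (Node l v r)
  have Mn: "M \<notin> labels (Node l v r)" using Node.prems(3) by auto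
  have dT: "distinct (label_list (Node l v r))" using Node.prems by simp
  have dI: "distinct (label_list (ins (Node l v r) k M))" using distinct_ins[OF Node.prems(1) dT Mn] .
  from Node.prems(1) show ?case
  proof (cases rule: ins_cases[where M=M])
    case R
    obtain N where N: "inversions (ins r k M) = inversions r \<union> ({M} \<times> N)" "N \<subseteq> labels r"
      "card N = ex (wl r 0 ! k)" using Node.IH(2)[of k] R Node.prems by auto
    have e: "inversions (ins (Node l v r) k M) = inversions l \<union> inversions (ins r k M) \<union>
           {(i, j). i \<in> labels l \<and> j \<in> insert v (labels (ins r k M)) \<and> j < i}"
      using inversions_Node[of l v "ins r k M"] dI R by simp
    have e2: "{(i, j). i \<in> labels l \<and> j \<in> insert v (labels (ins r k M)) \<and> j < i} =
              {(i, j). i \<in> labels l \<and> j \<in> insert v (labels r) \<and> j < i}"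
    proof -
      have lM: "\<And>x. x \<in> labels l \<Longrightarrow> x < M" using Node.prems(3) by auto
      show ?thesis unfolding labels_ins[OF R(1)]
      proof (intro set_eqI iffI)
        fix p assume "p \<in> {(i, j). i \<in> labels l \<and> j \<in> insert v (insert M (labels r)) \<and> j < i}"
        then obtain i j where ij: "p = (i, j)" "i \<in> labels l" "j \<in> insert v (insert M (labels r))" "j < i"
          by auto
        have "j \<noteq> M" using lM[OF ij(2)] ij(4) by auto
        thus "p \<in> {(i, j). i \<in> labels l \<and> j \<in> insert v (labels r) \<and> j < i}" using ij by auto
      qed auto
    qed
    have "inversions (ins (Node l v r) k M) = inversions (Node l v r) \<union> ({M} \<times> N)"
      unfolding e e2 N(1) inversions_Node[OF dT] by (simp add: Sigma_Un_distrib2 Un_ac)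
    moreover have "wl (Node l v r) 0 ! k = wl r 0 ! k" using R by (simp add: nth_append)
    ultimately show ?thesis using N(2,3) by (intro exI[of _ N]) auto
  next
    case X
    have "inversions (ins (Node l v r) k M) = {}"
      using X dI by (simp add: inversions_Node)
    moreover have "inversions (Node l v r) = {}" using X dT by (simp add: inversions_Node)
    moreover have "wl (Node l v r) 0 ! k = (VX, 0)" using X by simp
    ultimately show ?thesis by (intro exI[of _ "{}"]) simp
  next
    case Y
    have d1: "distinct (label_list (Node Leaf M Leaf))" by simp
    have i1: "inversions (Node Leaf M Leaf) = {}" using inversions_Node[OF d1] by simp
    have rM: "\<And>x. x \<in> insert v (labels r) \<Longrightarrow> x < M" using Node.prems(3) by auto
    have s1: "{(i, j). i \<in> labels (Node Leaf M Leaf) \<and> j \<in> insert v (labels r) \<and> j < i}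
             = {M} \<times> insert v (labels r)" using rM by auto
    have e: "inversions (ins (Node l v r) k M) = inversions r \<union> ({M} \<times> insert v (labels r))"
      using inversions_Node[of "Node Leaf M Leaf" v r] dI Y i1 s1 by simp
    have e0: "inversions (Node l v r) = inversions r" using inversions_Node[OF dT] Y by simp
    have "card (insert v (labels r)) = Suc (sz r)" using dT card_labels[of r] by simp
    moreover have "wl (Node l v r) 0 ! k = (VY, sz r)" using Y by (simp add: nth_append)
    ultimately show ?thesis using e e0 Y
      by (intro exI[of _ "insert v (labels r)"]) simp
  next
    case (L k')
    obtain N where N: "inversions (ins l k' M) = inversions l \<union> ({M} \<times> N)" "N \<subseteq> labels l"
      "card N = ex (wl l 0 ! k')" using Node.IH(1)[of k'] L Node.prems by auto
    have e: "inversions (ins (Node l v r) k M) = inversions (ins l k' M) \<union> inversions r \<union>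
           {(i, j). i \<in> labels (ins l k' M) \<and> j \<in> insert v (labels r) \<and> j < i}"
      using inversions_Node[of "ins l k' M" v r] dI L by simp
    have e2: "{(i, j). i \<in> labels (ins l k' M) \<and> j \<in> insert v (labels r) \<and> j < i} =
              {(i, j). i \<in> labels l \<and> j \<in> insert v (labels r) \<and> j < i} \<union> ({M} \<times> insert v (labels r))"
    proof -
      have lM: "\<And>x. x \<in> insert v (labels r) \<Longrightarrow> x < M" using Node.prems(3) by auto
      show ?thesis unfolding labels_ins[OF L(2)]
      proof (intro set_eqI iffI)
        fix p assume "p \<in> {(i, j). i \<in> insert M (labels l) \<and> j \<in> insert v (labels r) \<and> j < i}"
        then obtain i j where ij: "p = (i, j)" "i \<in> insert M (labels l)" "j \<in> insert v (labels r)" "j < i"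
          by auto
        thus "p \<in> {(i, j). i \<in> labels l \<and> j \<in> insert v (labels r) \<and> j < i} \<union> ({M} \<times> insert v (labels r))"
          by auto
      next
        fix p assume "p \<in> {(i, j). i \<in> labels l \<and> j \<in> insert v (labels r) \<and> j < i} \<union> ({M} \<times> insert v (labels r))"
        then consider (a) i j where "p = (i, j)" "i \<in> labels l" "j \<in> insert v (labels r)" "j < i"
          | (b) j where "p = (M, j)" "j \<in> insert v (labels r)" by auto
        thus "p \<in> {(i, j). i \<in> insert M (labels l) \<and> j \<in> insert v (labels r) \<and> j < i}"
        proof cases
          case a thus ?thesis by auto
        next
          case b thus ?thesis using lM[OF b(2)] by auto
        qed
      qed
    qed
    have inv: "inversions (ins (Node l v r) k M) = inversions (Node l v r) \<union> ({M} \<times> (N \<union> insert v (labels r)))"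
      unfolding e e2 N(1) inversions_Node[OF dT] by (simp add: Sigma_Un_distrib2 Un_ac)
    have disj: "N \<inter> insert v (labels r) = {}"
    proof -
      have "labels l \<inter> insert v (labels r) = {}" using dT by auto
      thus ?thesis using N(2) by blast
    qed
    have c: "card (N \<union> insert v (labels r)) = card N + Suc (sz r)"
      using card_Un_disjoint[OF finite_subset[OF N(2) finite_labels] _ disj] dT card_labels[of r] by simp
    have w: "wl (Node l v r) 0 ! k = wl l (Suc (sz r)) ! k'" using L by (simp add: nth_append)
    have "ex (wl (Node l v r) 0 ! k) = ex (wl l 0 ! k') + Suc (sz r)"
      unfolding w using ex_shift[OF L(2), of "Suc (sz r)"] by simp
    moreover have "N \<union> insert v (labels r) \<subseteq> labels (Node l v r)" using N(2) unfolding labels.simps by blast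
    ultimately show ?thesis using inv c N(3) by (intro exI[of _ "N \<union> insert v (labels r)"]) simp
  qed
qed

lemma inv_count_ins:
  assumes "k < nsp T" "distinct (label_list T)" "\<forall>x\<in>labels T. x < M"
  shows "inv_count (ins T k M) = inv_count T + ex (wl T 0 ! k)"
proof -
  obtain N where N: "inversions (ins T k M) = inversions T \<union> ({M} \<times> N)" "N \<subseteq> labels T"
       "card N = ex (wl T 0 ! k)" using inv_ins[OF assms] by blast
  have Mn: "M \<notin> labels T" using assms(3) by auto
  have disj: "inversions T \<inter> ({M} \<times> N) = {}" using inversions_sub[of T] Mn by auto
  have fN: "finite N" by (rule finite_subset[OF N(2)]) simp
  have "card ({M} \<times> N) = card N" by (simp add: card_cartesian_product)
  thus ?thesis unfolding inv_count_def N(1)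
    using card_Un_disjoint[OF finite_inversions _ disj] fN N(3) by simp
qed



lemma ins_mem:
  assumes T: "T \<in> andreII_trees m" and k: "k < nsp T"
  shows "ins T k (Suc m) \<in> andreII_trees (Suc m)"
proof -
  have d: "distinct (label_list T)" and lab: "labels T = {1..m}" and inc: "increasing T" and an: "andre2 T"
    using T by (auto simp: andreII_trees_def incr_tree_on_def)
  have lt: "\<forall>x\<in>labels T. x < Suc m" using lab by auto
  have nin: "Suc m \<notin> labels T" using lab by auto
  have "labels (ins T k (Suc m)) = {1..Suc m}" using labels_ins[OF k] lab by auto
  moreover have "distinct (label_list (ins T k (Suc m)))" using distinct_ins[OF k d nin] .
  moreover have "increasing (ins T k (Suc m))" using incr_ins[OF k inc lt] .
  moreover have "andre2 (ins T k (Suc m))" using andre_ins[OF k an lt] .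
  ultimately show ?thesis by (simp add: andreII_trees_def incr_tree_on_def)
qed

lemma ins_surj:
  assumes m: "1 \<le> m" and T': "T' \<in> andreII_trees (Suc m)"
  shows "\<exists>T k. T \<in> andreII_trees m \<and> k < nsp T \<and> T' = ins T k (Suc m)"
proof -
  define M where "M = Suc m"
  have d: "distinct (label_list T')" and lab: "labels T' = {1..M}" and inc: "increasing T'" and an: "andre2 T'"
    using T' by (auto simp: andreII_trees_def incr_tree_on_def M_def)
  have MT: "M \<in> labels T'" using lab M_def by simp
  have le: "\<forall>x\<in>labels T'. x \<le> M" using lab by simp
  have ne: "T' \<noteq> Node Leaf M Leaf"
  proof
    assume "T' = Node Leaf M Leaf"
    hence "labels T' = {M}" by simp
    moreover have "1 \<in> labels T'" using lab m M_def by simp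
    ultimately show False using m M_def by simp
  qed
  have P: "pos M T' < nsp (del M T') \<and> ins (del M T') (pos M T') M = T'"
    using ins_del_pos[OF d inc an MT le ne] .
  define T where "T = del M T'"
  have l1: "labels T = labels T' - {M}" unfolding T_def by (rule labels_del[OF inc le])
  have l2: "{1..M} - {M} = {1..m}" unfolding M_def by (rule set_eqI) auto
  have labT: "labels T = {1..m}" using l1 l2 lab by simp
  have dT: "distinct (label_list T)" unfolding T_def by (rule distinct_del[OF d])
  have iT: "increasing T" unfolding T_def by (rule incr_del[OF inc])
  have lt: "\<forall>x\<in>labels T. x < M" unfolding labT M_def by simp
  have aT: "andre2 T" using andre_ins_back[of "pos M T'" T M] P an lt unfolding T_def by simp
  have "T \<in> andreII_trees m" using labT dT iT aT by (simp add: andreII_trees_def incr_tree_on_def)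
  moreover have "pos M T' < nsp T" "T' = ins T (pos M T') (Suc m)" using P unfolding T_def M_def by simp_all
  ultimately show ?thesis by (intro exI[of _ T] exI[of _ "pos M T'"]) simp
qed

lemma ins_inj:
  assumes "\<forall>T\<in>X. M \<notin> labels T"
  shows "inj_on (\<lambda>(T, k). ins T k M) (SIGMA T:X. {..<nsp T})"
proof (rule inj_onI)
  fix p q assume p: "p \<in> (SIGMA T:X. {..<nsp T})" and q: "q \<in> (SIGMA T:X. {..<nsp T})"
    and e: "(\<lambda>(T, k). ins T k M) p = (\<lambda>(T, k). ins T k M) q"
  obtain T1 k1 where p1: "p = (T1, k1)" "T1 \<in> X" "k1 < nsp T1" using p by auto
  obtain T2 k2 where q1: "q = (T2, k2)" "T2 \<in> X" "k2 < nsp T2" using q by auto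
  have e': "ins T1 k1 M = ins T2 k2 M" using e p1 q1 by simp
  have "T1 = T2" using del_ins[OF p1(3)] del_ins[OF q1(3)] e' assms p1(2) q1(2) by metis
  moreover have "k1 = k2" using pos_ins[OF p1(3)] pos_ins[OF q1(3)] e' assms p1(2) q1(2) by metis
  ultimately show "p = q" using p1 q1 by simp
qed

lemma ins_image:
  assumes m: "1 \<le> m"
  shows "(\<lambda>(T, k). ins T k (Suc m)) ` (SIGMA T:andreII_trees m. {..<nsp T}) = andreII_trees (Suc m)"
proof (intro equalityI subsetI)
  fix x assume "x \<in> (\<lambda>(T, k). ins T k (Suc m)) ` (SIGMA T:andreII_trees m. {..<nsp T})"
  then obtain T k where "T \<in> andreII_trees m" "k < nsp T" "x = ins T k (Suc m)" by auto
  thus "x \<in> andreII_trees (Suc m)" using ins_mem by simp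
next
  fix x assume "x \<in> andreII_trees (Suc m)"
  then obtain T k where "T \<in> andreII_trees m" "k < nsp T" "x = ins T k (Suc m)"
    using ins_surj[OF m] by blast
  thus "x \<in> (\<lambda>(T, k). ins T k (Suc m)) ` (SIGMA T:andreII_trees m. {..<nsp T})" by force
qed

lemma A1: "andreII_trees 1 = {Node Leaf 1 Leaf}"
proof (intro equalityI subsetI)
  fix T assume "T \<in> andreII_trees 1"
  hence lab: "labels T = {1}" and inc: "increasing T" by (auto simp: andreII_trees_def incr_tree_on_def)
  then obtain l v r where T: "T = Node l v r" by (cases T) auto
  have v: "v = 1" using lab T by auto
  have "l = Leaf \<and> r = Leaf" using incr_top[of l v r] inc lab T v by auto
  thus "T \<in> {Node Leaf 1 Leaf}" using T v by simp
next
  fix T assume "T \<in> {Node Leaf (1::nat) Leaf}"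
  thus "T \<in> andreII_trees 1" by (simp add: andreII_trees_def incr_tree_on_def min_label_def)
qed

lemma finite_A: "finite (andreII_trees (Suc n))"
proof (induction n)
  case 0 thus ?case using A1 by simp
next
  case (Suc n)
  have "finite (SIGMA T:andreII_trees (Suc n). {..<nsp T})" using Suc by auto
  hence "finite ((\<lambda>(T, k). ins T k (Suc (Suc n))) ` (SIGMA T:andreII_trees (Suc n). {..<nsp T}))"
    by (rule finite_imageI)
  thus ?case using ins_image[of "Suc n"] by simp
qed



definition Fs :: "btree set \<Rightarrow> (btree \<Rightarrow> word) \<Rightarrow> (btree \<Rightarrow> 'a::comm_ring_1 poly) \<Rightarrow> 'a elt" where
  "Fs X g p = (\<lambda>w. \<Sum>T\<in>X. if g T = w then p T else 0)"

lemma supp_Fs: "finite X \<Longrightarrow> supp (Fs X g p) \<subseteq> g ` X"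
proof
  fix w assume f: "finite X" and w: "w \<in> supp (Fs X g p)"
  show "w \<in> g ` X"
  proof (rule ccontr)
    assume "w \<notin> g ` X"
    hence "\<And>T. T \<in> X \<Longrightarrow> (if g T = w then p T else 0) = 0" by auto
    hence "Fs X g p w = 0" unfolding Fs_def by (simp add: sum.neutral)
    thus False using w by (simp add: supp_def)
  qed
qed

lemma D_Fs:
  assumes f: "finite X"
  shows "D_AndII (Fs X g p) v = (\<Sum>T\<in>X. p T * D_word (g T) v)"
proof -
  have "D_AndII (Fs X g p) v = (\<Sum>w\<in>supp (Fs X g p). Fs X g p w * D_word w v)"
    by (simp add: D_AndII_def lin_ext_def)
  also have "\<dots> = (\<Sum>w\<in>g ` X. Fs X g p w * D_word w v)"
  proof (rule sum.mono_neutral_left)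
    show "finite (g ` X)" using f by simp
    show "supp (Fs X g p) \<subseteq> g ` X" using supp_Fs[OF f] .
    show "\<forall>w\<in>g ` X - supp (Fs X g p). Fs X g p w * D_word w v = 0" by (simp add: supp_def)
  qed
  also have "\<dots> = (\<Sum>w\<in>g ` X. \<Sum>T\<in>X. (if g T = w then p T * D_word w v else 0))"
    unfolding Fs_def sum_distrib_right by (intro sum.cong refl) simp
  also have "\<dots> = (\<Sum>T\<in>X. \<Sum>w\<in>g ` X. (if g T = w then p T * D_word w v else 0))"
    by (rule sum.swap)
  also have "\<dots> = (\<Sum>T\<in>X. p T * D_word (g T) v)"
    using f by (intro sum.cong refl) simp
  finally show ?thesis .
qed

lemma rule_eq: "rule_AndII x = single_elt (rw x) (monom 1 (ex x))"
  by (cases x, cases "fst x") auto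

lemma supp_single: "c \<noteq> 0 \<Longrightarrow> supp (single_elt u c) = {u}"
  by (auto simp: supp_def single_elt_def)

lemma D_word_wl:
  "D_word (wl T 0) v = (\<Sum>j<nsp T. if wl (ins T j M) 0 = v then (monom 1 (ex (wl T 0 ! j)) :: 'a::comm_ring_1 poly) else 0)"
proof -
  have "(D_word (wl T 0) v :: 'a poly) = (\<Sum>j<nsp T. \<Sum>u\<in>supp (rule_AndII (wl T 0 ! j) :: 'a elt).
      if AIO (take j (wl T 0) @ u @ up (drop (Suc j) (wl T 0))) = v then rule_AndII (wl T 0 ! j) u else 0)"
    by (simp add: D_word_def)
  also have "\<dots> = (\<Sum>j<nsp T. if wl (ins T j M) 0 = v then (monom 1 (ex (wl T 0 ! j)) :: 'a poly) else 0)"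
  proof (rule sum.cong[OF refl])
    fix j assume "j \<in> {..<nsp T}"
    hence j: "j < nsp T" by simp
    have nz: "(monom 1 (ex (wl T 0 ! j)) :: 'a poly) \<noteq> 0" by simp
    have A: "AIO (take j (wl T 0) @ rw (wl T 0 ! j) @ up (drop (Suc j) (wl T 0))) = wl (ins T j M) 0"
      using wl_ins[OF j, of M 0] AIO_wl[of "ins T j M" 0] by simp
    show "(\<Sum>u\<in>supp (rule_AndII (wl T 0 ! j) :: 'a elt).
      if AIO (take j (wl T 0) @ u @ up (drop (Suc j) (wl T 0))) = v then rule_AndII (wl T 0 ! j) u else 0)
      = (if wl (ins T j M) 0 = v then (monom 1 (ex (wl T 0 ! j)) :: 'a poly) else 0)"
      unfolding rule_eq supp_single[OF nz] using A by (simp add: single_elt_def)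
  qed
  finally show ?thesis .
qed

definition Fm :: "nat \<Rightarrow> 'a::comm_ring_1 elt" where
  "Fm m = Fs (andreII_trees m) (\<lambda>T. wl T 0) (\<lambda>T. monom 1 (inv_count T))"

lemma Fm_step: "D_AndII (Fm (Suc n) :: 'a::comm_ring_1 elt) = Fm (Suc (Suc n))"
proof
  fix v
  define m where "m = Suc n"
  define A where "A = andreII_trees m"
  define h :: "btree \<Rightarrow> 'a poly" where "h T' = (if wl T' 0 = v then monom 1 (inv_count T') else 0)" for T'
  have fA: "finite A" unfolding A_def m_def by (rule finite_A)
  have "D_AndII (Fm (Suc n) :: 'a elt) v = D_AndII (Fs A (\<lambda>T. wl T 0) (\<lambda>T. monom 1 (inv_count T)) :: 'a elt) v"
    unfolding Fm_def A_def m_def ..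
  also have "\<dots> = (\<Sum>T\<in>A. monom 1 (inv_count T) * D_word (wl T 0) v)"
    by (rule D_Fs[OF fA])
  also have "\<dots> = (\<Sum>T\<in>A. \<Sum>j<nsp T. h (ins T j (Suc m)))"
  proof (rule sum.cong[OF refl])
    fix T assume T: "T \<in> A"
    have d: "distinct (label_list T)" and lt: "\<forall>x\<in>labels T. x < Suc m"
      using T unfolding A_def by (auto simp: andreII_trees_def incr_tree_on_def)
    show "monom 1 (inv_count T) * D_word (wl T 0) v = (\<Sum>j<nsp T. h (ins T j (Suc m)))"
      unfolding D_word_wl[of T v "Suc m"] sum_distrib_left
    proof (rule sum.cong[OF refl])
      fix j assume "j \<in> {..<nsp T}"
      hence j: "j < nsp T" by simp
      show "monom 1 (inv_count T) *
         (if wl (ins T j (Suc m)) 0 = v then (monom 1 (ex (wl T 0 ! j)) :: 'a poly) else 0) = h (ins T j (Suc m))"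
        unfolding h_def inv_count_ins[OF j d lt] by (simp add: mult_monom)
    qed
  qed
  also have "\<dots> = (\<Sum>p\<in>(SIGMA T:A. {..<nsp T}). h ((\<lambda>(T, k). ins T k (Suc m)) p))"
    using fA by (subst sum.Sigma) (auto simp: split_def)
  also have "\<dots> = (\<Sum>T'\<in>(\<lambda>(T, k). ins T k (Suc m)) ` (SIGMA T:A. {..<nsp T}). h T')"
  proof (rule sum.reindex[symmetric, unfolded comp_def])
    show "inj_on (\<lambda>(T, k). ins T k (Suc m)) (SIGMA T:A. {..<nsp T})"
      by (rule ins_inj) (auto simp: A_def andreII_trees_def incr_tree_on_def)
  qed
  also have "\<dots> = (\<Sum>T'\<in>andreII_trees (Suc m). h T')"
    using ins_image[of m] unfolding A_def m_def by simp
  also have "\<dots> = Fm (Suc (Suc n)) v"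
    unfolding Fm_def Fs_def h_def m_def by simp
  finally show "D_AndII (Fm (Suc n) :: 'a elt) v = Fm (Suc (Suc n)) v" .
qed

lemma Fm_1: "(Fm (Suc 0) :: 'a::comm_ring_1 elt) = single_elt [(VX, 0)] 1"
proof -
  have "inversions (Node Leaf 1 Leaf) = {}" using inversions_Node[of Leaf 1 Leaf] by simp
  thus ?thesis unfolding Fm_def Fs_def One_nat_def[symmetric] A1 by (auto simp: single_elt_def inv_count_def)
qed

lemma iter_Fm: "((D_AndII :: 'a::comm_ring_1 elt \<Rightarrow> 'a elt) ^^ n) (single_elt [(VX, 0)] 1) = Fm (Suc n)"
proof (induction n)
  case 0
  show ?case by (simp add: Fm_1)
next
  case (Suc n) thus ?case using Fm_step by simp
qed



lemma phi_Fs: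
  assumes f: "finite X"
  shows "phi_coeff (Fs X g (\<lambda>T. monom 1 (h T)) :: 'a::comm_ring_1 elt) a b c =
    of_nat (card {T\<in>X. length (filter (\<lambda>l. fst l = VX) (g T)) = a \<and>
                        length (filter (\<lambda>l. fst l = VY) (g T)) = b \<and> h T = c})"
proof -
  define P where "P w \<longleftrightarrow> length (filter (\<lambda>l. fst l = VX) w) = a \<and> length (filter (\<lambda>l. fst l = VY) w) = b" for w :: word
  define F where "F = (Fs X g (\<lambda>T. monom 1 (h T)) :: 'a elt)"
  have "phi_coeff F a b c = (\<Sum>w\<in>{w\<in>supp F. P w}. coeff (F w) c)"
    unfolding phi_coeff_def P_def ..
  also have "\<dots> = (\<Sum>w\<in>{w\<in>g ` X. P w}. coeff (F w) c)"
  proof (rule sum.mono_neutral_left)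
    show "finite {w\<in>g ` X. P w}" using f by simp
    show "{w\<in>supp F. P w} \<subseteq> {w\<in>g ` X. P w}" using supp_Fs[OF f] unfolding F_def by blast
    show "\<forall>w\<in>{w\<in>g ` X. P w} - {w\<in>supp F. P w}. coeff (F w) c = 0" by (auto simp: supp_def)
  qed
  also have "\<dots> = (\<Sum>w\<in>{w\<in>g ` X. P w}. \<Sum>T\<in>X. if g T = w then (of_bool (h T = c) :: 'a) else 0)"
    unfolding F_def Fs_def coeff_sum by (intro sum.cong refl) auto
  also have "\<dots> = (\<Sum>T\<in>X. \<Sum>w\<in>{w\<in>g ` X. P w}. if g T = w then (of_bool (h T = c) :: 'a) else 0)"
    by (rule sum.swap)
  also have "\<dots> = (\<Sum>T\<in>X. (of_bool (P (g T) \<and> h T = c) :: 'a))"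
  proof (rule sum.cong[OF refl])
    fix T assume "T \<in> X"
    moreover have "finite {w\<in>g ` X. P w}" using f by simp
    ultimately show "(\<Sum>w\<in>{w\<in>g ` X. P w}. if g T = w then (of_bool (h T = c) :: 'a) else 0) =
        of_bool (P (g T) \<and> h T = c)" by simp
  qed
  also have "\<dots> = of_nat (card (X \<inter> {T. P (g T) \<and> h T = c}))"
    using f by simp
  also have "X \<inter> {T. P (g T) \<and> h T = c} = {T\<in>X. length (filter (\<lambda>l. fst l = VX) (g T)) = a \<and>
                        length (filter (\<lambda>l. fst l = VY) (g T)) = b \<and> h T = c}"
    unfolding P_def by blast
  finally show ?thesis unfolding F_def .
qed

lemma cX_wl: "length (filter (\<lambda>l. fst l = VX) (wl T c)) = n_leaves T"
  by (induction T arbitrary: c) auto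

lemma cY_wl: "andre2 T \<Longrightarrow> length (filter (\<lambda>l. fst l = VY) (wl T c)) = n_unary T"
proof (induction T arbitrary: c)
  case Leaf thus ?case by simp
next
  case (Node l v r)
  have "l \<noteq> Leaf \<Longrightarrow> r \<noteq> Leaf"
  proof
    assume "l \<noteq> Leaf" "r = Leaf"
    thus False using Node.prems by (simp add: min_label_def)
  qed
  thus ?case using Node by auto
qed

theorem theorem6p12:
  fixes n a b c :: nat
  shows "phi_coeff (((D_AndII :: ('a::{comm_ring_1, ring_char_0}) elt \<Rightarrow> 'a elt) ^^ n)
                     (single_elt [(VX, 0)] 1)) a b c
         = of_nat (card {T \<in> andreII_trees (Suc n).
                 n_leaves T = a \<and> n_unary T = b \<and> inv_count T = c})"
proof -
  have "phi_coeff (((D_AndII :: 'a elt \<Rightarrow> 'a elt) ^^ n) (single_elt [(VX, 0)] 1)) a b c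
      = phi_coeff (Fm (Suc n) :: 'a elt) a b c" by (simp add: iter_Fm)
  also have "\<dots> = of_nat (card {T\<in>andreII_trees (Suc n). length (filter (\<lambda>l. fst l = VX) (wl T 0)) = a \<and>
                        length (filter (\<lambda>l. fst l = VY) (wl T 0)) = b \<and> inv_count T = c})"
    unfolding Fm_def by (rule phi_Fs[OF finite_A])
  also have "{T\<in>andreII_trees (Suc n). length (filter (\<lambda>l. fst l = VX) (wl T 0)) = a \<and>
                        length (filter (\<lambda>l. fst l = VY) (wl T 0)) = b \<and> inv_count T = c}
           = {T \<in> andreII_trees (Suc n). n_leaves T = a \<and> n_unary T = b \<and> inv_count T = c}"
  proof (rule Collect_cong)
    fix T
    show "(T \<in> andreII_trees (Suc n) \<and> length (filter (\<lambda>l. fst l = VX) (wl T 0)) = a \<and>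
                        length (filter (\<lambda>l. fst l = VY) (wl T 0)) = b \<and> inv_count T = c) =
          (T \<in> andreII_trees (Suc n) \<and> n_leaves T = a \<and> n_unary T = b \<and> inv_count T = c)"
      using cX_wl[of T 0] cY_wl[of T 0] by (auto simp: andreII_trees_def)
  qed
  finally show ?thesis .
qed


end
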